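(* Let $n\in\mathbb N\cup\{\omega\}$ and let $F\colon C\to D$ be a Conduché $n$-prefunctor between $n$-precategories. If $F(u)=1_v$ for some $k<n$, $u\in C_{k+1}$ and $v\in D_k$, then there exists a unique $u'\in C_k$ such that $F(u')=v$ and $u=1_{u'}$.
   Context: An $n$-precategory is an $n$-globular set $C$ (sets $C_k$, $k\le n$, with $s_i,t_i\colon C_{i+1}\to C_i$ satisfying $s_is_{i+1}=s_it_{i+1}$, $t_is_{i+1}=t_it_{i+1}$) with identities $u\mapsto1_u\colon C_k\to C_{k+1}$ and compositions $u\ast_iv\in C_{\max(k,l)}$ for $u\in C_k$, $v\in C_l$, $k,l\ge1$, $i=\min(k,l)-1$, $t_i(u)=s_i(v)$, satisfying the axioms of strict $n$-categories for sources/targets, units (e.g. $1_{s(w)}\ast_kw=w=w\ast_k1_{t(w)}$ for $w\in C_{k+1}$), associativity and distributivity of lower- over higher-dimensional composition, but not necessarily the interchange law; prefunctors preserve all this structure. An $n$-prefunctor $F\colon C\to D$ is Conduché if for all $k_1,k_2\ge1$ with $i=\min(k_1,k_2)-1$, $k=\max(k_1,k_2)$, every $u\in C_k$ and $i$-composable $v_1\in D_{k_1}$, $v_2\in D_{k_2}$ with $F(u)=v_1\ast_iv_2$, there exist unique $i$-composable $u_1\in C_{k_1}$, $u_2\in C_{k_2}$ with $F(u_1)=v_1$, $F(u_2)=v_2$ and $u_1\ast_iu_2=u$. *)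

theory Defs
  imports Main "HOL-Library.Extended_Nat"
begin

text \<open>An n-precategory (n a natural number or omega, encoded as enat), presented
  many-sorted: cells k is the set C_k (empty for k > n); src i, tgt i : C_(i+1) -> C_i;
  ident k : C_k -> C_(k+1); comp k l u v is the composite u *_i v of u in C_k and v in C_l,
  with i = min k l - 1 (the dimensions k, l are passed explicitly since the carrier
  type is shared by all dimensions).\<close>

record 'a pcat =
  cells :: "nat \<Rightarrow> 'a set"
  src :: "nat \<Rightarrow> 'a \<Rightarrow> 'a"
  tgt :: "nat \<Rightarrow> 'a \<Rightarrow> 'a"
  ident :: "nat \<Rightarrow> 'a \<Rightarrow> 'a"
  comp :: "nat \<Rightarrow> nat \<Rightarrow> 'a \<Rightarrow> 'a \<Rightarrow> 'a"

text \<open>Iterated source/target: isrc P i d maps an (i+d)-cell to its i-source.\<close>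
fun isrc :: "'a pcat \<Rightarrow> nat \<Rightarrow> nat \<Rightarrow> 'a \<Rightarrow> 'a" where
  "isrc P i 0 u = u"
| "isrc P i (Suc d) u = src P i (isrc P (Suc i) d u)"

fun itgt :: "'a pcat \<Rightarrow> nat \<Rightarrow> nat \<Rightarrow> 'a \<Rightarrow> 'a" where
  "itgt P i 0 u = u"
| "itgt P i (Suc d) u = tgt P i (itgt P (Suc i) d u)"

definition bsrc :: "'a pcat \<Rightarrow> nat \<Rightarrow> nat \<Rightarrow> 'a \<Rightarrow> 'a" where
  "bsrc P i k u = isrc P i (k - i) u"

definition btgt :: "'a pcat \<Rightarrow> nat \<Rightarrow> nat \<Rightarrow> 'a \<Rightarrow> 'a" where
  "btgt P i k u = itgt P i (k - i) u"

definition composable :: "'a pcat \<Rightarrow> nat \<Rightarrow> nat \<Rightarrow> 'a \<Rightarrow> 'a \<Rightarrow> bool" where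
  "composable P k l u v \<longleftrightarrow> u \<in> cells P k \<and> v \<in> cells P l \<and> 1 \<le> k \<and> 1 \<le> l \<and>
     btgt P (min k l - 1) k u = bsrc P (min k l - 1) l v"

definition is_precat :: "enat \<Rightarrow> 'a pcat \<Rightarrow> bool" where
  "is_precat n P \<longleftrightarrow>
    \<comment> \<open>only cells of dimension \<le> n\<close>
    (\<forall>k. n < enat k \<longrightarrow> cells P k = {}) \<and>
    \<comment> \<open>globular set\<close>
    (\<forall>i. \<forall>x\<in>cells P (Suc i). src P i x \<in> cells P i \<and> tgt P i x \<in> cells P i) \<and>
    (\<forall>i. \<forall>x\<in>cells P (Suc (Suc i)).
        src P i (src P (Suc i) x) = src P i (tgt P (Suc i) x) \<and>
        tgt P i (src P (Suc i) x) = tgt P i (tgt P (Suc i) x)) \<and>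
    \<comment> \<open>identities\<close>
    (\<forall>k. enat k < n \<longrightarrow> (\<forall>x\<in>cells P k. ident P k x \<in> cells P (Suc k) \<and>
        src P k (ident P k x) = x \<and> tgt P k (ident P k x) = x)) \<and>
    \<comment> \<open>compositions: typing and sources/targets\<close>
    (\<forall>k l u v. composable P k l u v \<longrightarrow>
        comp P k l u v \<in> cells P (max k l) \<and>
        (k = l \<longrightarrow> src P (k - 1) (comp P k l u v) = src P (k - 1) u \<and>
                   tgt P (k - 1) (comp P k l u v) = tgt P (k - 1) v) \<and>
        (k < l \<longrightarrow> src P (l - 1) (comp P k l u v) = comp P k (l - 1) u (src P (l - 1) v) \<and>
                   tgt P (l - 1) (comp P k l u v) = comp P k (l - 1) u (tgt P (l - 1) v)) \<and>
        (l < k \<longrightarrow> src P (k - 1) (comp P k l u v) = comp P (k - 1) l (src P (k - 1) u) v \<and>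
                   tgt P (k - 1) (comp P k l u v) = comp P (k - 1) l (tgt P (k - 1) u) v)) \<and>
    \<comment> \<open>units\<close>
    (\<forall>k m w. k < m \<longrightarrow> w \<in> cells P m \<longrightarrow>
        comp P (Suc k) m (ident P k (bsrc P k m w)) w = w \<and>
        comp P m (Suc k) w (ident P k (btgt P k m w)) = w) \<and>
    \<comment> \<open>identities of composites\<close>
    (\<forall>k l u v. composable P k l u v \<longrightarrow> enat (max k l) < n \<longrightarrow>
        (k \<le> l \<longrightarrow> ident P (max k l) (comp P k l u v) = comp P k (Suc l) u (ident P l v)) \<and>
        (l \<le> k \<longrightarrow> ident P (max k l) (comp P k l u v) = comp P (Suc k) l (ident P k u) v)) \<and>
    \<comment> \<open>associativity (all three compositions along the same i)\<close>
    (\<forall>k1 k2 k3 u v w.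
        composable P k1 k2 u v \<and> composable P (max k1 k2) k3 (comp P k1 k2 u v) w \<and>
        composable P k2 k3 v w \<and> composable P k1 (max k2 k3) u (comp P k2 k3 v w) \<and>
        min (max k1 k2) k3 = min k1 k2 \<and> min k2 k3 = min k1 k2 \<and>
        min k1 (max k2 k3) = min k1 k2 \<longrightarrow>
        comp P (max k1 k2) k3 (comp P k1 k2 u v) w = comp P k1 (max k2 k3) u (comp P k2 k3 v w)) \<and>
    \<comment> \<open>distributivity of lower- over higher-dimensional composition\<close>
    (\<forall>k l l' u v w.
        min k (max l l') < min l l' \<and>
        composable P l l' v w \<and> composable P k (max l l') u (comp P l l' v w) \<and>
        composable P k l u v \<and> composable P k l' u w \<and>
        composable P (max k l) (max k l') (comp P k l u v) (comp P k l' u w) \<longrightarrow>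
        comp P k (max l l') u (comp P l l' v w) =
        comp P (max k l) (max k l') (comp P k l u v) (comp P k l' u w)) \<and>
    (\<forall>k l l' u v w.
        min k (max l l') < min l l' \<and>
        composable P l l' v w \<and> composable P (max l l') k (comp P l l' v w) u \<and>
        composable P l k v u \<and> composable P l' k w u \<and>
        composable P (max l k) (max l' k) (comp P l k v u) (comp P l' k w u) \<longrightarrow>
        comp P (max l l') k (comp P l l' v w) u =
        comp P (max l k) (max l' k) (comp P l k v u) (comp P l' k w u))"

definition is_prefunctor :: "enat \<Rightarrow> 'a pcat \<Rightarrow> 'b pcat \<Rightarrow> (nat \<Rightarrow> 'a \<Rightarrow> 'b) \<Rightarrow> bool" where
  "is_prefunctor n C D F \<longleftrightarrow>
    (\<forall>k. \<forall>x\<in>cells C k. F k x \<in> cells D k) \<and>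
    (\<forall>i. \<forall>x\<in>cells C (Suc i). F i (src C i x) = src D i (F (Suc i) x) \<and>
                               F i (tgt C i x) = tgt D i (F (Suc i) x)) \<and>
    (\<forall>k. enat k < n \<longrightarrow> (\<forall>x\<in>cells C k. F (Suc k) (ident C k x) = ident D k (F k x))) \<and>
    (\<forall>k l u v. composable C k l u v \<longrightarrow>
        F (max k l) (comp C k l u v) = comp D k l (F k u) (F l v))"

definition conduche :: "'a pcat \<Rightarrow> 'b pcat \<Rightarrow> (nat \<Rightarrow> 'a \<Rightarrow> 'b) \<Rightarrow> bool" where
  "conduche C D F \<longleftrightarrow>
    (\<forall>k1 k2 u v1 v2. u \<in> cells C (max k1 k2) \<longrightarrow> composable D k1 k2 v1 v2 \<longrightarrow>
       F (max k1 k2) u = comp D k1 k2 v1 v2 \<longrightarrow>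
       (\<exists>!p. composable C k1 k2 (fst p) (snd p) \<and> F k1 (fst p) = v1 \<and> F k2 (snd p) = v2 \<and>
             comp C k1 k2 (fst p) (snd p) = u))"

end

theory Submission
  imports Defs
begin

theorem proposition2p6:
  fixes n :: enat and C :: "'a pcat" and D :: "'b pcat" and F :: "nat \<Rightarrow> 'a \<Rightarrow> 'b"
    and k :: nat and u :: 'a and v :: 'b
  assumes "is_precat n C" and "is_precat n D" and "is_prefunctor n C D F"
    and "conduche C D F"
    and "enat k < n" and "u \<in> cells C (Suc k)" and "v \<in> cells D k"
    and "F (Suc k) u = ident D k v"
  shows "\<exists>!u'. u' \<in> cells C k \<and> F k u' = v \<and> u = ident C k u'"
proof -
  have bs: "\<And>P. bsrc P k (Suc k) x = src P k x" for x :: 'c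
    by (simp add: bsrc_def)
  have bt: "\<And>P. btgt P k (Suc k) x = tgt P k x" for x :: 'c
    by (simp add: btgt_def)
  from assms(1) have Cglob: "\<forall>i. \<forall>x\<in>cells C (Suc i). src C i x \<in> cells C i \<and> tgt C i x \<in> cells C i"
    and Cid: "\<forall>k. enat k < n \<longrightarrow> (\<forall>x\<in>cells C k. ident C k x \<in> cells C (Suc k) \<and>
        src C k (ident C k x) = x \<and> tgt C k (ident C k x) = x)"
    and Cun: "\<forall>k m w. k < m \<longrightarrow> w \<in> cells C m \<longrightarrow>
        comp C (Suc k) m (ident C k (bsrc C k m w)) w = w \<and>
        comp C m (Suc k) w (ident C k (btgt C k m w)) = w"
    by (simp_all add: is_precat_def)
  from assms(2) have Did: "\<forall>k. enat k < n \<longrightarrow> (\<forall>x\<in>cells D k. ident D k x \<in> cells D (Suc k) \<and>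
        src D k (ident D k x) = x \<and> tgt D k (ident D k x) = x)"
    and Dun: "\<forall>k m w. k < m \<longrightarrow> w \<in> cells D m \<longrightarrow>
        comp D (Suc k) m (ident D k (bsrc D k m w)) w = w \<and>
        comp D m (Suc k) w (ident D k (btgt D k m w)) = w"
    by (simp_all add: is_precat_def)
  from assms(3) have
    Fst: "\<forall>i. \<forall>x\<in>cells C (Suc i). F i (src C i x) = src D i (F (Suc i) x) \<and>
                               F i (tgt C i x) = tgt D i (F (Suc i) x)"
    and Fid: "\<forall>k. enat k < n \<longrightarrow> (\<forall>x\<in>cells C k. F (Suc k) (ident C k x) = ident D k (F k x))"
    by (simp_all add: is_prefunctor_def)
  define s where "s = src C k u"
  define t where "t = tgt C k u"
  have s: "s \<in> cells C k" and t: "t \<in> cells C k" using Cglob assms(6) by (auto simp: s_def t_def)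
  have isd: "ident C k s \<in> cells C (Suc k)" "src C k (ident C k s) = s" "tgt C k (ident C k s) = s"
    using Cid assms(5) s by auto
  have it: "ident C k t \<in> cells C (Suc k)" "src C k (ident C k t) = t" "tgt C k (ident C k t) = t"
    using Cid assms(5) t by auto
  have iv: "ident D k v \<in> cells D (Suc k)" "src D k (ident D k v) = v" "tgt D k (ident D k v) = v"
    using Did assms(5,7) by auto
  have Fs: "F k s = v" using Fst assms(6,8) iv by (simp add: s_def)
  have Ft: "F k t = v" using Fst assms(6,8) iv by (simp add: t_def)
  have Fis: "F (Suc k) (ident C k s) = ident D k v" using Fid assms(5) s Fs by auto
  have Fit: "F (Suc k) (ident C k t) = ident D k v" using Fid assms(5) t Ft by auto
  have cD: "composable D (Suc k) (Suc k) (ident D k v) (ident D k v)"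
    unfolding composable_def using iv by (simp add: bs bt)
  have eqD: "comp D (Suc k) (Suc k) (ident D k v) (ident D k v) = ident D k v"
    using Dun[rule_format, of k "Suc k" "ident D k v"] iv by (simp add: bs)
  have c1: "composable C (Suc k) (Suc k) (ident C k s) u"
    unfolding composable_def using isd assms(6) by (simp add: bs bt s_def)
  have c2: "composable C (Suc k) (Suc k) u (ident C k t)"
    unfolding composable_def using it assms(6) by (simp add: bs bt t_def)
  have e1: "comp C (Suc k) (Suc k) (ident C k s) u = u"
    using Cun[rule_format, of k "Suc k" u] assms(6) by (simp add: bs s_def)
  have e2: "comp C (Suc k) (Suc k) u (ident C k t) = u"
    using Cun[rule_format, of k "Suc k" u] assms(6) by (simp add: bt t_def)
  have ex1: "\<exists>!p. composable C (Suc k) (Suc k) (fst p) (snd p) \<and> F (Suc k) (fst p) = ident D k v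
      \<and> F (Suc k) (snd p) = ident D k v \<and> comp C (Suc k) (Suc k) (fst p) (snd p) = u"
    using assms(4) assms(6,8) cD eqD unfolding conduche_def
    by (metis max.idem)
  have "(ident C k s, u) = (u, ident C k t)"
    using ex1 c1 c2 e1 e2 Fis Fit assms(8) by (metis fst_conv snd_conv)
  hence uid: "u = ident C k s" by simp
  show ?thesis
  proof (rule ex1I[of _ s])
    show "s \<in> cells C k \<and> F k s = v \<and> u = ident C k s" using s Fs uid by simp
  next
    fix y assume "y \<in> cells C k \<and> F k y = v \<and> u = ident C k y"
    then show "y = s" using Cid assms(5) s_def by auto
  qed
qed

end
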